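(* In the setting below, the internal energy $H_{\mathcal G}(t)=K_{\mathcal G}(t)-U_{\mathcal G}(t)$ of the cluster has a finite limit as $t\nearrow T$; in particular it is bounded on $[t_0,T)$.
   Context: Setting: let $d\in\{2,3\}$, $n\ge2$, masses $m_1,\dots,m_n>0$, and let $q(t)=(q_1(t),\dots,q_n(t))$, $q_i(t)\in\mathbb{R}^d$, be a solution on $[t_0,T)$ of $m_i\ddot q_i=\partial U/\partial q_i$, $U(q)=\sum_{i<j}m_im_j/|q_i-q_j|$, with $q_i(t)\ne q_j(t)$ for $i\ne j$, $t<T$, such that every limit $L_i=\lim_{t\nearrow T}q_i(t)$ exists. Let $\mathcal G\subset\{1,\dots,n\}$ be a cluster with at least two elements: $L_i=L_j=:L_{\mathcal G}$ for $i,j\in\mathcal G$ and $L_j\neq L_{\mathcal G}$ for $j\notin\mathcal G$. $K_{\mathcal G}=\frac12\sum_{i\in\mathcal G}m_i|\dot q_i|^2$, $U_{\mathcal G}=\sum_{i<j,\,i,j\in\mathcal G}m_im_j/|q_i-q_j|$. *)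

theory Defs
  imports "HOL-Analysis.Analysis"
begin

text \<open>Partial gradient dU/dq_i of the potential, written out explicitly.\<close>
definition nbody_force :: "nat \<Rightarrow> (nat \<Rightarrow> real) \<Rightarrow> (nat \<Rightarrow> real ^ 'd) \<Rightarrow> nat \<Rightarrow> real ^ 'd" where
  "nbody_force n m x i = (\<Sum>j \<in> {1..n} - {i}. (m i * m j / norm (x j - x i) ^ 3) *\<^sub>R (x j - x i))"

definition cluster_K :: "nat set \<Rightarrow> (nat \<Rightarrow> real) \<Rightarrow> (nat \<Rightarrow> real ^ 'd) \<Rightarrow> real" where
  "cluster_K G m v = (1/2) * (\<Sum>i\<in>G. m i * (norm (v i))\<^sup>2)"

definition cluster_U :: "nat set \<Rightarrow> (nat \<Rightarrow> real) \<Rightarrow> (nat \<Rightarrow> real ^ 'd) \<Rightarrow> real" where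
  "cluster_U G m x = (\<Sum>(i,j) \<in> {(i,j). i \<in> G \<and> j \<in> G \<and> i < j}. m i * m j / norm (x i - x j))"

end

theory Submission
  imports Defs
begin



lemma offdiag_swap:
  assumes "finite A"
  shows "(\<Sum>i\<in>A. \<Sum>j\<in>A-{i}. f i j) = (\<Sum>i\<in>A. \<Sum>j\<in>A-{i}. (f j i :: 'b::comm_monoid_add))"
proof -
  have "(\<Sum>i\<in>A. \<Sum>j\<in>A-{i}. f i j) = (\<Sum>i\<in>A. \<Sum>j\<in>{j\<in>A. i \<noteq> j}. f i j)"
    by (intro sum.cong) auto
  also have "\<dots> = (\<Sum>j\<in>A. \<Sum>i\<in>{i\<in>A. i \<noteq> j}. f i j)"
    using assms by (rule sum.swap_restrict[OF _ assms])
  also have "\<dots> = (\<Sum>i\<in>A. \<Sum>j\<in>A-{i}. (f j i))"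
    by (intro sum.cong) auto
  finally show ?thesis .
qed

lemma offdiag_sym:
  assumes "finite A" and anti: "\<And>i j. g j i = - g i j"
  shows "(\<Sum>i\<in>A. \<Sum>j\<in>A-{i}. inner (g i j) (w i :: 'a::real_inner))
       = (1/2) * (\<Sum>i\<in>A. \<Sum>j\<in>A-{i}. inner (g i j) (w i - w j))"
proof -
  have "(\<Sum>i\<in>A. \<Sum>j\<in>A-{i}. inner (g i j) (w j)) = (\<Sum>i\<in>A. \<Sum>j\<in>A-{i}. inner (g j i) (w i))"
    by (rule offdiag_swap[OF assms(1)])
  also have "\<dots> = - (\<Sum>i\<in>A. \<Sum>j\<in>A-{i}. inner (g i j) (w i))"
  proof -
    have "inner (g j i) (w i) = - inner (g i j) (w i)" for i j using anti[of j i] by simp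
    thus ?thesis by (simp add: sum_negf)
  qed
  finally have *: "(\<Sum>i\<in>A. \<Sum>j\<in>A-{i}. inner (g i j) (w j)) = - (\<Sum>i\<in>A. \<Sum>j\<in>A-{i}. inner (g i j) (w i))" .
  have "(\<Sum>i\<in>A. \<Sum>j\<in>A-{i}. inner (g i j) (w i - w j)) =
     (\<Sum>i\<in>A. \<Sum>j\<in>A-{i}. inner (g i j) (w i)) - (\<Sum>i\<in>A. \<Sum>j\<in>A-{i}. inner (g i j) (w j))"
    by (simp add: inner_diff_right sum_subtractf)
  with * show ?thesis by simp
qed

definition U2 :: "nat set \<Rightarrow> (nat \<Rightarrow> real) \<Rightarrow> (nat \<Rightarrow> real ^ 'd) \<Rightarrow> real" where
  "U2 A m x = (1/2) * (\<Sum>i\<in>A. \<Sum>j\<in>A-{i}. m i * m j / norm (x i - x j))"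

lemma cluster_U_eq:
  assumes "finite A"
  shows "cluster_U A m x = U2 A m x"
proof -
  define f where "f = (\<lambda>(i::nat,j::nat). m i * m j / norm (x i - x j))"
  have fs: "f (j,i) = f (i,j)" for i j by (simp add: f_def norm_minus_commute mult.commute)
  define P where "P = {(i,j). i \<in> A \<and> j \<in> A \<and> i < j}"
  define Q where "Q = {(i,j). i \<in> A \<and> j \<in> A \<and> i \<noteq> j}"
  have fP: "finite P" unfolding P_def by (rule finite_subset[of _ "A \<times> A"]) (auto simp: assms)
  have QP: "Q = P \<union> prod.swap ` P" unfolding P_def Q_def by (auto simp: image_iff)
  have disj: "P \<inter> prod.swap ` P = {}" unfolding P_def by auto
  have "sum f (prod.swap ` P) = sum (f \<circ> prod.swap) P"
    by (rule sum.reindex) simp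
  also have "\<dots> = sum f P" by (intro sum.cong) (auto simp: fs)
  finally have sw: "sum f (prod.swap ` P) = sum f P" .
  have "sum f Q = sum f P + sum f (prod.swap ` P)"
    unfolding QP by (rule sum.union_disjoint) (use fP disj in auto)
  hence Q2: "sum f Q = 2 * sum f P" using sw by simp
  have "(\<Sum>i\<in>A. \<Sum>j\<in>A-{i}. m i * m j / norm (x i - x j)) = (\<Sum>i\<in>A. \<Sum>j\<in>A-{i}. f (i,j))"
    by (simp add: f_def)
  also have "\<dots> = sum f (SIGMA i:A. A-{i})"
    unfolding f_def using assms by (simp add: sum.Sigma)
  also have "(SIGMA i:A. A-{i}) = Q" unfolding Q_def by auto
  finally have "(\<Sum>i\<in>A. \<Sum>j\<in>A-{i}. m i * m j / norm (x i - x j)) = 2 * sum f P" using Q2 by simp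
  moreover have "cluster_U A m x = sum f P" unfolding cluster_U_def P_def f_def by simp
  ultimately show ?thesis unfolding U2_def by simp
qed

lemma mono_from_deriv:
  fixes f f' :: "real \<Rightarrow> real"
  assumes d: "\<And>t. t \<in> {a..<b} \<Longrightarrow> (f has_real_derivative f' t) (at t within {a..<b})"
    and nn: "\<And>t. t \<in> {a..<b} \<Longrightarrow> f' t \<ge> 0"
    and xy: "a \<le> x" "x \<le> y" "y < b"
  shows "f x \<le> f y"
proof (rule DERIV_nonneg_imp_increasing_open[OF xy(2)])
  fix z assume z: "x < z" "z < y"
  hence "z \<in> interior {a..<b}" using xy by auto
  hence "at z within {a..<b} = at z" by (rule at_within_interior)
  with d[of z] z xy show "\<exists>y. DERIV f z :> y \<and> y \<ge> 0" using nn[of z] by auto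
next
  have "continuous_on {a..<b} f"
    unfolding continuous_on_eq_continuous_within using d DERIV_continuous by blast
  thus "continuous_on {x..y} f" by (rule continuous_on_subset) (use xy in auto)
qed

lemma pos_lower_bound:
  fixes f :: "real \<Rightarrow> real"
  assumes c: "continuous_on {a..<b} f" and pos: "\<And>t. t \<in> {a..<b} \<Longrightarrow> f t > 0"
    and l: "(f \<longlongrightarrow> l) (at_left b)" and lpos: "l > 0" and ab: "a < b"
  shows "\<exists>\<delta>>0. \<forall>t\<in>{a..<b}. f t \<ge> \<delta>"
proof -
  have "eventually (\<lambda>t. f t > l/2) (at_left b)"
    using l lpos by (intro order_tendstoD) auto
  then obtain c0 where c0: "c0 < b" "\<And>t. c0 < t \<Longrightarrow> t < b \<Longrightarrow> f t > l/2"
    unfolding eventually_at_left_field by blast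
  define c where "c = max a c0"
  have cb: "a \<le> c" "c < b" using c0 ab by (auto simp: c_def)
  have "continuous_on {a..c} f" by (rule continuous_on_subset[OF c]) (use cb in auto)
  then obtain x where x: "x \<in> {a..c}" "\<And>y. y \<in> {a..c} \<Longrightarrow> f x \<le> f y"
    using continuous_attains_inf[of "{a..c}" f] cb by auto
  have fx: "f x > 0" using pos[of x] x cb by auto
  show ?thesis
  proof (intro exI[of _ "min (l/2) (f x)"] conjI ballI)
    show "min (l/2) (f x) > 0" using fx lpos by auto
    fix t assume t: "t \<in> {a..<b}"
    show "min (l/2) (f x) \<le> f t"
    proof (cases "t \<le> c")
      case True thus ?thesis using x(2)[of t] t by auto
    next
      case False
      hence "c0 < t" by (simp add: c_def)
      hence "f t > l/2" using c0(2)[of t] t by auto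
      thus ?thesis by linarith
    qed
  qed
qed


lemma inner_vd:
  assumes "(x has_vector_derivative w) (at t within S)" "(y has_vector_derivative u) (at t within S)"
  shows "((\<lambda>s. inner (x s) (y s)) has_real_derivative (inner (x t) u + inner w (y t))) (at t within S)"
proof -
  have "((\<lambda>s. inner (x s) (y s)) has_derivative (\<lambda>h. inner (x t) (h *\<^sub>R u) + inner (h *\<^sub>R w) (y t))) (at t within S)"
    using assms unfolding has_vector_derivative_def by (intro has_derivative_inner)
  thus ?thesis unfolding has_field_derivative_def
    by (rule has_derivative_eq_rhs) (auto simp: algebra_simps fun_eq_iff)
qed

lemma inv_norm_deriv:
  assumes d: "(x has_vector_derivative w) (at t within S)" and nz: "x t \<noteq> 0"
  shows "((\<lambda>s. 1 / norm (x s)) has_real_derivative (- inner (x t) w / norm (x t) ^ 3)) (at t within S)"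
proof -
  have n2: "((\<lambda>s. inner (x s) (x s)) has_real_derivative (2 * inner (x t) w)) (at t within S)"
    using inner_vd[OF d d] by (simp add: inner_commute)
  have pos: "inner (x t) (x t) > 0" using nz by simp
  have "((\<lambda>s. sqrt (inner (x s) (x s))) has_real_derivative (inverse (sqrt (inner (x t) (x t))) / 2 * (2 * inner (x t) w))) (at t within S)"
    by (rule DERIV_chain2[OF DERIV_real_sqrt[OF pos] n2])
  hence nd: "((\<lambda>s. norm (x s)) has_real_derivative (inner (x t) w / norm (x t))) (at t within S)"
    by (simp add: norm_eq_sqrt_inner[symmetric] field_simps)
  have nn: "norm (x t) \<noteq> 0" using nz by simp
  have A: "((\<lambda>s. inverse (norm (x s))) has_real_derivative (- ((inner (x t) w / norm (x t)) * inverse (norm (x t) ^ Suc (Suc 0))))) (at t within S)"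
    by (rule DERIV_inverse_fun[OF nd nn])
  have eq: "- ((inner (x t) w / norm (x t)) * inverse (norm (x t) ^ Suc (Suc 0))) = - inner (x t) w / norm (x t) ^ 3"
    using nn by (simp add: field_simps power3_eq_cube power2_eq_square)
  from A[unfolded eq] show ?thesis unfolding inverse_eq_divide .
qed


lemma at_within_Ico_at_left:
  fixes a b :: real
  assumes "a < b" shows "at b within {a..<b} = at_left b"
  using order_tendstoD(1)[OF tendsto_ident_at assms, of "{..<b}"]
  by (auto intro!: order_class.order_antisym filter_leI
      simp: eventually_at_filter less_le
      elim: eventually_elim2)

lemma mono_left_lim:
  fixes f :: "real \<Rightarrow> real"
  assumes ab: "a < b" and mono: "\<And>x y. a \<le> x \<Longrightarrow> x \<le> y \<Longrightarrow> y < b \<Longrightarrow> f x \<le> f y"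
    and bnd: "\<And>x. a \<le> x \<Longrightarrow> x < b \<Longrightarrow> f x \<le> K"
  shows "\<exists>l. (f \<longlongrightarrow> l) (at_left b)"
proof -
  have "(f \<longlongrightarrow> Sup (f ` ({..<b} \<inter> {a..<b}))) (at b within ({..<b} \<inter> {a..<b}))"
    by (rule Lim_left_bound[where K=K]) (use mono bnd in auto)
  moreover have "{..<b} \<inter> {a..<b} = {a..<b}" by auto
  ultimately show ?thesis using at_within_Ico_at_left[OF ab] by auto
qed


locale nb =
  fixes n :: nat and m :: "nat \<Rightarrow> real" and t0 T :: real
    and q v :: "real \<Rightarrow> nat \<Rightarrow> real ^ 'd" and L :: "nat \<Rightarrow> real ^ 'd"
  assumes mpos: "\<And>i. i \<in> {1..n} \<Longrightarrow> m i > 0"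
    and tT: "t0 < T"
    and vel: "\<And>i t. i \<in> {1..n} \<Longrightarrow> t \<in> {t0..<T} \<Longrightarrow>
                ((\<lambda>s. q s i) has_vector_derivative v t i) (at t within {t0..<T})"
    and eqn: "\<And>i t. i \<in> {1..n} \<Longrightarrow> t \<in> {t0..<T} \<Longrightarrow>
                ((\<lambda>s. v s i) has_vector_derivative (1 / m i) *\<^sub>R nbody_force n m (q t) i) (at t within {t0..<T})"
    and nocoll: "\<And>i j t. i \<in> {1..n} \<Longrightarrow> j \<in> {1..n} \<Longrightarrow> i \<noteq> j \<Longrightarrow> t \<in> {t0..<T} \<Longrightarrow> q t i \<noteq> q t j"
    and lim: "\<And>i. i \<in> {1..n} \<Longrightarrow> ((\<lambda>t. q t i) \<longlongrightarrow> L i) (at_left T)"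
begin

abbreviation "N \<equiv> {1..n}"
abbreviation "S \<equiv> {t0..<T}"

definition F where "F t i = nbody_force n m (q t) i"
definition g where "g t i j = (m i * m j / norm (q t j - q t i) ^ 3) *\<^sub>R (q t j - q t i)"

lemma F_eq: "F t i = (\<Sum>j\<in>N-{i}. g t i j)"
  unfolding F_def g_def nbody_force_def ..

lemma g_anti: "g t j i = - g t i j"
  unfolding g_def by (simp add: norm_minus_commute mult.commute scaleR_right_diff_distrib)

lemma dK:
  assumes A: "A \<subseteq> N" and t: "t \<in> S"
  shows "((\<lambda>s. cluster_K A m (v s)) has_real_derivative (\<Sum>i\<in>A. inner (v t i) (F t i))) (at t within S)"
proof -
  have fA: "finite A" using A finite_subset by blast
  have ev: "((\<lambda>s. v s i) has_vector_derivative (1/m i) *\<^sub>R F t i) (at t within S)" if "i \<in> A" for i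
    unfolding F_def using eqn[of i t] A t that by blast
  have D1: "((\<lambda>s. (1/2) * (\<Sum>i\<in>A. m i * inner (v s i) (v s i))) has_real_derivative
        (1/2) * (\<Sum>i\<in>A. m i * (inner (v t i) ((1 / m i) *\<^sub>R F t i) + inner ((1 / m i) *\<^sub>R F t i) (v t i)))) (at t within S)"
    by (intro DERIV_cmult DERIV_sum inner_vd ev)
  moreover have E1: "(1/2) * (\<Sum>i\<in>A. m i * (inner (v t i) ((1 / m i) *\<^sub>R F t i) + inner ((1 / m i) *\<^sub>R F t i) (v t i)))
     = (\<Sum>i\<in>A. inner (v t i) (F t i))"
  proof -
    have "\<And>i. i \<in> A \<Longrightarrow> m i * (inner (v t i) ((1 / m i) *\<^sub>R F t i) + inner ((1 / m i) *\<^sub>R F t i) (v t i)) = 2 * inner (v t i) (F t i)"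
    proof -
      fix i assume "i \<in> A"
      hence "m i > 0" using mpos A by auto
      have c: "inner ((1 / m i) *\<^sub>R F t i) (v t i) = inner (v t i) ((1 / m i) *\<^sub>R F t i)" by (rule inner_commute)
      show "m i * (inner (v t i) ((1 / m i) *\<^sub>R F t i) + inner ((1 / m i) *\<^sub>R F t i) (v t i)) = 2 * inner (v t i) (F t i)"
        unfolding c inner_scaleR_right using \<open>m i > 0\<close> by (simp add: algebra_simps)
    qed
    hence "(\<Sum>i\<in>A. m i * (inner (v t i) ((1 / m i) *\<^sub>R F t i) + inner ((1 / m i) *\<^sub>R F t i) (v t i))) = (\<Sum>i\<in>A. 2 * inner (v t i) (F t i))"
      by (rule sum.cong[OF refl])
    thus ?thesis by (simp add: sum_distrib_left)
  qed
  moreover have Fq: "(\<lambda>s. cluster_K A m (v s)) = (\<lambda>s. (1/2) * (\<Sum>i\<in>A. m i * inner (v s i) (v s i)))"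
    unfolding cluster_K_def by (simp add: power2_norm_eq_inner)
  have "((\<lambda>s. (1/2) * (\<Sum>i\<in>A. m i * inner (v s i) (v s i))) has_real_derivative (\<Sum>i\<in>A. inner (v t i) (F t i))) (at t within S)"
    using D1 unfolding E1 .
  thus ?thesis unfolding Fq .
qed

lemma dU:
  assumes A: "A \<subseteq> N" and t: "t \<in> S"
  shows "((\<lambda>s. U2 A m (q s)) has_real_derivative (\<Sum>i\<in>A. \<Sum>j\<in>A-{i}. inner (g t i j) (v t i))) (at t within S)"
proof -
  have fA: "finite A" using A finite_subset by blast
  have D1: "((\<lambda>s. (1/2) * (\<Sum>i\<in>A. \<Sum>j\<in>A-{i}. m i * m j * (1 / norm (q s i - q s j)))) has_real_derivative
     (1/2) * (\<Sum>i\<in>A. \<Sum>j\<in>A-{i}. m i * m j * (- inner (q t i - q t j) (v t i - v t j) / norm (q t i - q t j) ^ 3))) (at t within S)"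
    apply (intro DERIV_cmult DERIV_sum)
    apply (rule inv_norm_deriv)
    subgoal for i j using vel[of i t] vel[of j t] A t by (intro has_vector_derivative_diff) auto
    subgoal for i j using nocoll[of i j t] A t subsetD[OF A, of i] subsetD[OF A, of j] by auto
    done
  moreover have E1: "(1/2) * (\<Sum>i\<in>A. \<Sum>j\<in>A-{i}. m i * m j * (- inner (q t i - q t j) (v t i - v t j) / norm (q t i - q t j) ^ 3))
     = (1/2) * (\<Sum>i\<in>A. \<Sum>j\<in>A-{i}. inner (g t i j) (v t i - v t j))"
  proof -
    have "m i * m j * (- inner (q t i - q t j) w / norm (q t i - q t j) ^ 3) = inner (g t i j) w" for i j w
    proof -
      have e: "q t j - q t i = - (q t i - q t j)" by simp
      show ?thesis unfolding g_def e norm_minus_cancel inner_scaleR_left inner_minus_left by simp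
    qed
    thus ?thesis by simp
  qed
  moreover have E2: "(\<Sum>i\<in>A. \<Sum>j\<in>A-{i}. inner (g t i j) (v t i)) = (1/2) * (\<Sum>i\<in>A. \<Sum>j\<in>A-{i}. inner (g t i j) (v t i - v t j))"
    by (rule offdiag_sym[OF fA g_anti])
  moreover have Fq: "U2 A m (q s) = (1/2) * (\<Sum>i\<in>A. \<Sum>j\<in>A-{i}. m i * m j * (1 / norm (q s i - q s j)))" for s
    unfolding U2_def by simp
  have "((\<lambda>s. (1/2) * (\<Sum>i\<in>A. \<Sum>j\<in>A-{i}. m i * m j * (1 / norm (q s i - q s j)))) has_real_derivative
     (\<Sum>i\<in>A. \<Sum>j\<in>A-{i}. inner (g t i j) (v t i))) (at t within S)"
    using D1 unfolding E1 E2[symmetric] .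
  thus ?thesis unfolding Fq .
qed


definition K where "K t = cluster_K N m (v t)"
definition Ut where "Ut t = U2 N m (q t)"
definition I where "I t = (\<Sum>i\<in>N. m i * inner (q t i - L i) (q t i - L i))"
definition J where "J t = 2 * (\<Sum>i\<in>N. m i * inner (q t i - L i) (v t i))"
definition P where "P t = (1/2) * (\<Sum>i\<in>N. \<Sum>j\<in>N-{i}. inner (g t i j) (L i - L j))"

lemma energy:
  assumes t: "t \<in> S" shows "K t - Ut t = K t0 - Ut t0"
proof -
  have d: "((\<lambda>s. K s - Ut s) has_real_derivative 0) (at s within S)" if s: "s \<in> S" for s
  proof -
    have "((\<lambda>s. K s - Ut s) has_real_derivative
       ((\<Sum>i\<in>N. inner (v s i) (F s i)) - (\<Sum>i\<in>N. \<Sum>j\<in>N-{i}. inner (g s i j) (v s i)))) (at s within S)"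
      unfolding K_def Ut_def by (intro DERIV_diff dK dU) (use s in auto)
    moreover have "(\<Sum>i\<in>N. inner (v s i) (F s i)) = (\<Sum>i\<in>N. \<Sum>j\<in>N-{i}. inner (g s i j) (v s i))"
      unfolding F_eq by (simp add: inner_sum_right inner_commute)
    ultimately show ?thesis by simp
  qed
  have "K t0 - Ut t0 \<le> K t - Ut t"
    by (rule mono_from_deriv[OF d]) (use t in auto)
  moreover have "- (K t0 - Ut t0) \<le> - (K t - Ut t)"
  proof (rule mono_from_deriv[where f="\<lambda>s. - (K s - Ut s)" and f'="\<lambda>_. 0" and a=t0 and b=T])
    fix s assume s: "s \<in> S"
    show "((\<lambda>s. - (K s - Ut s)) has_real_derivative 0) (at s within S)"
      using DERIV_minus[OF d[OF s]] by simp
  qed (use t in auto)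
  ultimately show ?thesis by simp
qed

lemma qLd: "i \<in> N \<Longrightarrow> t \<in> S \<Longrightarrow> ((\<lambda>s. q s i - L i) has_vector_derivative v t i) (at t within S)"
  using has_vector_derivative_diff[OF vel has_vector_derivative_const[of "L i"]] by simp

lemma dI:
  assumes t: "t \<in> S" shows "(I has_real_derivative J t) (at t within S)"
proof -
  have "((\<lambda>s. (\<Sum>i\<in>N. m i * inner (q s i - L i) (q s i - L i))) has_real_derivative
     (\<Sum>i\<in>N. m i * (inner (q t i - L i) (v t i) + inner (v t i) (q t i - L i)))) (at t within S)"
    apply (intro DERIV_sum DERIV_cmult inner_vd)
    using vel t qLd by auto
  thus ?thesis unfolding I_def[abs_def] J_def by (simp add: inner_commute sum_distrib_left algebra_simps)
qed

lemma virial_sum: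
  "(\<Sum>i\<in>N. inner (q t i - L i) (F t i)) = - Ut t - P t" if t: "t \<in> S"
proof -
  have "(\<Sum>i\<in>N. inner (q t i - L i) (F t i)) = (\<Sum>i\<in>N. \<Sum>j\<in>N-{i}. inner (g t i j) (q t i - L i))"
    unfolding F_eq by (simp add: inner_sum_right inner_commute)
  also have "\<dots> = (1/2) * (\<Sum>i\<in>N. \<Sum>j\<in>N-{i}. inner (g t i j) ((q t i - L i) - (q t j - L j)))"
    by (rule offdiag_sym[OF _ g_anti]) simp
  also have "\<dots> = (1/2) * (\<Sum>i\<in>N. \<Sum>j\<in>N-{i}. (- (m i * m j / norm (q t i - q t j))) - inner (g t i j) (L i - L j))"
  proof -
    have "inner (g t i j) ((q t i - L i) - (q t j - L j)) = (- (m i * m j / norm (q t i - q t j))) - inner (g t i j) (L i - L j)"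
      if ij: "i \<in> N" "j \<in> N-{i}" for i j
    proof -
      have nz: "norm (q t i - q t j) \<noteq> 0" using nocoll[of i j t] ij t by auto
      have e: "(q t i - L i) - (q t j - L j) = - (q t j - q t i) - (L i - L j)" by (simp add: algebra_simps)
      have "inner (g t i j) (q t j - q t i) = m i * m j / norm (q t j - q t i) ^ 3 * (norm (q t j - q t i))\<^sup>2"
        unfolding g_def inner_scaleR_left power2_norm_eq_inner by simp
      also have "\<dots> = m i * m j / norm (q t i - q t j)"
        using nz by (simp add: norm_minus_commute power3_eq_cube power2_eq_square)
      finally have gq: "inner (g t i j) (q t j - q t i) = m i * m j / norm (q t i - q t j)" .
      have "inner (g t i j) ((q t i - L i) - (q t j - L j)) = - inner (g t i j) (q t j - q t i) - inner (g t i j) (L i - L j)"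
        unfolding e inner_diff_right inner_minus_right ..
      thus ?thesis unfolding gq .
    qed
    thus ?thesis by (intro arg_cong[where f="\<lambda>x. (1/2) * x"] sum.cong refl) auto
  qed
  also have "\<dots> = (1/2) * (- (\<Sum>i\<in>N. \<Sum>j\<in>N-{i}. m i * m j / norm (q t i - q t j)) - (\<Sum>i\<in>N. \<Sum>j\<in>N-{i}. inner (g t i j) (L i - L j)))"
    by (simp only: sum_subtractf sum_negf)
  also have "\<dots> = - Ut t - P t"
    unfolding Ut_def U2_def P_def by (simp add: algebra_simps)
  finally show ?thesis .
qed

lemma dJ:
  assumes t: "t \<in> S" shows "(J has_real_derivative (4 * K t - 2 * Ut t - 2 * P t)) (at t within S)"
proof -
  have D: "((\<lambda>s. 2 * (\<Sum>i\<in>N. m i * inner (q s i - L i) (v s i))) has_real_derivative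
     2 * (\<Sum>i\<in>N. m i * (inner (q t i - L i) ((1 / m i) *\<^sub>R F t i) + inner (v t i) (v t i)))) (at t within S)"
    apply (intro DERIV_cmult DERIV_sum inner_vd)
    using vel eqn t qLd by (auto simp: F_def)
  have E: "(\<Sum>i\<in>N. m i * (inner (q t i - L i) ((1 / m i) *\<^sub>R F t i) + inner (v t i) (v t i)))
     = (\<Sum>i\<in>N. inner (q t i - L i) (F t i)) + 2 * K t"
  proof -
    have "m i * (inner (q t i - L i) ((1 / m i) *\<^sub>R F t i) + inner (v t i) (v t i))
        = inner (q t i - L i) (F t i) + m i * inner (v t i) (v t i)" if i: "i \<in> N" for i
    proof -
      have "m i > 0" using mpos i by auto
      hence "m i * (1 / m i * inner (q t i - L i) (F t i)) = inner (q t i - L i) (F t i)" by simp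
      thus ?thesis unfolding inner_scaleR_right distrib_left by simp
    qed
    hence "(\<Sum>i\<in>N. m i * (inner (q t i - L i) ((1 / m i) *\<^sub>R F t i) + inner (v t i) (v t i)))
        = (\<Sum>i\<in>N. inner (q t i - L i) (F t i) + m i * inner (v t i) (v t i))"
      by (rule sum.cong[OF refl])
    also have "\<dots> = (\<Sum>i\<in>N. inner (q t i - L i) (F t i)) + 2 * K t"
      unfolding K_def cluster_K_def by (simp add: sum.distrib power2_norm_eq_inner)
    finally show ?thesis .
  qed
  have V: "2 * ((\<Sum>i\<in>N. inner (q t i - L i) (F t i)) + 2 * K t) = 4 * K t - 2 * Ut t - 2 * P t"
    using virial_sum[OF t] by simp
  have "J = (\<lambda>s. 2 * (\<Sum>i\<in>N. m i * inner (q s i - L i) (v s i)))" unfolding J_def[abs_def] ..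
  with D show ?thesis unfolding E V by simp
qed

lemma qcont: "i \<in> N \<Longrightarrow> continuous_on S (\<lambda>t. q t i)"
  unfolding continuous_on_eq_continuous_within using vel has_vector_derivative_continuous by blast

lemma sep_exists:
  "\<exists>\<delta>. \<forall>i j. i \<in> N \<and> j \<in> N \<and> L i \<noteq> L j \<longrightarrow> \<delta> i j > 0 \<and> (\<forall>t\<in>S. \<delta> i j \<le> norm (q t i - q t j))"
proof -
  have "\<exists>d. i \<in> N \<and> j \<in> N \<and> L i \<noteq> L j \<longrightarrow> d > 0 \<and> (\<forall>t\<in>S. d \<le> norm (q t i - q t j))" for i j
  proof (cases "i \<in> N \<and> j \<in> N \<and> L i \<noteq> L j")
    case True
    have "\<exists>d>0. \<forall>t\<in>S. norm (q t i - q t j) \<ge> d"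
    proof (rule pos_lower_bound[OF _ _ _ _ tT])
      show "continuous_on S (\<lambda>t. norm (q t i - q t j))"
        using qcont True by (intro continuous_intros) auto
      show "\<And>t. t \<in> S \<Longrightarrow> norm (q t i - q t j) > 0" using nocoll True by auto
      show "((\<lambda>t. norm (q t i - q t j)) \<longlongrightarrow> norm (L i - L j)) (at_left T)"
        using lim True by (intro tendsto_intros) auto
      show "norm (L i - L j) > 0" using True by auto
    qed
    thus ?thesis by auto
  qed auto
  hence "\<forall>i. \<exists>f. \<forall>j. i \<in> N \<and> j \<in> N \<and> L i \<noteq> L j \<longrightarrow> f j > 0 \<and> (\<forall>t\<in>S. f j \<le> norm (q t i - q t j))"
    by (intro allI choice) blast
  thus ?thesis by (rule choice)
qed

lemma m_nonneg: "Suc 0 \<le> i \<Longrightarrow> i \<le> n \<Longrightarrow> 0 \<le> m i"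
  using mpos[of i] by simp

lemma I_nonneg: "I t \<ge> 0"
  unfolding I_def by (intro sum_nonneg mult_nonneg_nonneg) (auto intro: m_nonneg)

lemma I_lim: "(I \<longlongrightarrow> 0) (at_left T)"
proof -
  have "((\<lambda>t. \<Sum>i\<in>N. m i * inner (q t i - L i) (q t i - L i)) \<longlongrightarrow> (\<Sum>i\<in>N. m i * inner (L i - L i) (L i - L i))) (at_left T)"
    using lim by (intro tendsto_intros) auto
  thus ?thesis unfolding I_def[abs_def] by simp
qed

lemma K_nonneg: "K t \<ge> 0"
  unfolding K_def cluster_K_def by (intro mult_nonneg_nonneg sum_nonneg) (auto intro: m_nonneg)

lemma J_bound:
  assumes C: "C \<ge> 0" and dJb: "\<And>t. t \<in> S \<Longrightarrow> 4 * K t - 2 * Ut t - 2 * P t \<ge> - C"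
    and s: "s \<in> S"
  shows "J s \<le> C * (T - s)"
proof (rule ccontr)
  assume "\<not> J s \<le> C * (T - s)"
  define e where "e = J s - C * (T - s)"
  have e: "e > 0" using \<open>\<not> J s \<le> C * (T - s)\<close> by (simp add: e_def)
  have sT: "s < T" "t0 \<le> s" using s by auto
  have Jge: "J t \<ge> e" if t: "s \<le> t" "t < T" for t
  proof -
    have "J s + C * s \<le> J t + C * t"
    proof (rule mono_from_deriv[where f="\<lambda>t. J t + C * t" and f'="\<lambda>t. (4 * K t - 2 * Ut t - 2 * P t) + C"])
      fix x assume "x \<in> S"
      thus "((\<lambda>t. J t + C * t) has_real_derivative (4 * K x - 2 * Ut x - 2 * P x) + C) (at x within S)"
        by (auto intro!: derivative_eq_intros dJ)
      show "(4 * K x - 2 * Ut x - 2 * P x) + C \<ge> 0" using dJb[OF \<open>x \<in> S\<close>] by simp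
    qed (use sT t in auto)
    hence "J t \<ge> J s - C * (t - s)" by (simp add: algebra_simps)
    moreover have "C * (t - s) \<le> C * (T - s)" using C t by (intro mult_left_mono) auto
    ultimately show ?thesis unfolding e_def by simp
  qed
  have Ige: "I t \<ge> e * (t - s)" if t: "s \<le> t" "t < T" for t
  proof -
    have "I s - e * s \<le> I t - e * t"
    proof (rule mono_from_deriv[where a=s and b=T and f="\<lambda>t. I t - e * t" and f'="\<lambda>t. J t - e"])
      fix x assume x: "x \<in> {s..<T}"
      hence "x \<in> S" using sT by auto
      hence "(I has_real_derivative J x) (at x within {s..<T})"
        by (rule DERIV_subset[OF dI]) (use sT in auto)
      thus "((\<lambda>t. I t - e * t) has_real_derivative J x - e) (at x within {s..<T})"
        by (auto intro!: derivative_eq_intros)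
      show "J x - e \<ge> 0" using Jge x by auto
    qed (use t in auto)
    thus ?thesis using I_nonneg[of s] by (simp add: algebra_simps)
  qed
  have "e * (T - s) \<le> 0"
  proof (rule tendsto_le[OF trivial_limit_at_left_real I_lim])
    show "((\<lambda>t. e * (t - s)) \<longlongrightarrow> e * (T - s)) (at_left T)"
      by (intro tendsto_intros)
    show "\<forall>\<^sub>F t in at_left T. e * (t - s) \<le> I t"
      using eventually_at_left_real[OF sT(1)] by eventually_elim (use Ige in auto)
  qed
  moreover have "e * (T - s) > 0" using e sT by auto
  ultimately show False by simp
qed


lemma main:
  fixes G :: "nat set"
  assumes Gsub: "G \<subseteq> N" and Gsep: "\<And>i j. i \<in> G \<Longrightarrow> j \<in> N - G \<Longrightarrow> L j \<noteq> L i"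
  shows "(\<exists>h. ((\<lambda>t. cluster_K G m (v t) - cluster_U G m (q t)) \<longlongrightarrow> h) (at_left T))
       \<and> (\<exists>B. \<forall>t\<in>S. \<bar>cluster_K G m (v t) - cluster_U G m (q t)\<bar> \<le> B)"
proof -
  obtain \<delta> where \<delta>: "\<And>i j. i \<in> N \<Longrightarrow> j \<in> N \<Longrightarrow> L i \<noteq> L j \<Longrightarrow> \<delta> i j > 0 \<and> (\<forall>t\<in>S. \<delta> i j \<le> norm (q t i - q t j))"
    using sep_exists by metis
  have fG: "finite G" using Gsub finite_subset by blast
  have gb: "norm (g t i j) \<le> m i * m j / (\<delta> i j)\<^sup>2"
    if ij: "i \<in> N" "j \<in> N" "L i \<noteq> L j" and t: "t \<in> S" for i j t
  proof -
    define r where "r = norm (q t j - q t i)"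
    have d: "\<delta> i j > 0" "\<delta> i j \<le> r" using \<delta>[OF ij] t by (auto simp: r_def norm_minus_commute)
    have r0: "r > 0" using d by simp
    have mm: "m i * m j > 0" using mpos ij by auto
    have "norm (g t i j) = m i * m j / r ^ 3 * r"
      unfolding g_def r_def using mm by simp
    also have "\<dots> = m i * m j / r\<^sup>2" using r0 by (simp add: power3_eq_cube power2_eq_square)
    also have "\<dots> \<le> m i * m j / (\<delta> i j)\<^sup>2"
      using d mm by (intro divide_left_mono power_mono mult_pos_pos) auto
    finally show ?thesis .
  qed
  define Pm where "Pm = (1/2) * (\<Sum>i\<in>N. \<Sum>j\<in>N-{i}. m i * m j / (\<delta> i j)\<^sup>2 * norm (L i - L j))"
  have Pb: "\<bar>P t\<bar> \<le> Pm" if t: "t \<in> S" for t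
  proof -
    have "\<bar>\<Sum>i\<in>N. \<Sum>j\<in>N-{i}. inner (g t i j) (L i - L j)\<bar> \<le> (\<Sum>i\<in>N. \<Sum>j\<in>N-{i}. \<bar>inner (g t i j) (L i - L j)\<bar>)"
      by (rule order_trans[OF sum_abs sum_mono]) (rule sum_abs)
    also have "\<dots> \<le> (\<Sum>i\<in>N. \<Sum>j\<in>N-{i}. m i * m j / (\<delta> i j)\<^sup>2 * norm (L i - L j))"
    proof (intro sum_mono)
      fix i j assume ij: "i \<in> N" "j \<in> N - {i}"
      show "\<bar>inner (g t i j) (L i - L j)\<bar> \<le> m i * m j / (\<delta> i j)\<^sup>2 * norm (L i - L j)"
      proof (cases "L i = L j")
        case False
        have "\<bar>inner (g t i j) (L i - L j)\<bar> \<le> norm (g t i j) * norm (L i - L j)"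
          by (rule Cauchy_Schwarz_ineq2)
        also have "\<dots> \<le> m i * m j / (\<delta> i j)\<^sup>2 * norm (L i - L j)"
          using gb[of i j t] ij False t by (intro mult_right_mono) auto
        finally show ?thesis .
      qed simp
    qed
    finally show ?thesis unfolding P_def Pm_def by simp
  qed
  define h0 where "h0 = K t0 - Ut t0"
  define C0 where "C0 = 2 * \<bar>h0\<bar> + 2 * Pm"
  have Pm0: "Pm \<ge> 0" using Pb[of t0] tT by auto
  have C0: "C0 \<ge> 0" using Pm0 by (simp add: C0_def)
  have dJb: "4 * K t - 2 * Ut t - 2 * P t \<ge> 2 * K t - C0" if t: "t \<in> S" for t
    using energy[OF t] Pb[OF t] abs_ge_minus_self[of "K t0 - Ut t0"] unfolding C0_def h0_def by (simp add: abs_le_iff)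
  have dJb': "4 * K t - 2 * Ut t - 2 * P t \<ge> - C0" if t: "t \<in> S" for t
    using dJb[OF t] K_nonneg[of t] by simp
  have Jle: "J t \<le> C0 * (T - t0)" if t: "t \<in> S" for t
  proof -
    have "J t \<le> C0 * (T - t)" by (rule J_bound[OF C0 dJb' t])
    also have "\<dots> \<le> C0 * (T - t0)" using C0 t by (intro mult_left_mono) auto
    finally show ?thesis .
  qed
  define X where "X i = (\<Sum>j\<in>N-G. m i * m j / (\<delta> i j)\<^sup>2)" for i
  have X0: "X i \<ge> 0" if "i \<in> G" for i
  proof -
    have "i \<in> N" using that Gsub by auto
    thus ?thesis unfolding X_def by (intro sum_nonneg divide_nonneg_nonneg mult_nonneg_nonneg) (auto intro: m_nonneg)
  qed
  define A0 where "A0 = (\<Sum>i\<in>G. X i)"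
  define B0 where "B0 = (\<Sum>i\<in>G. 2 * X i / m i)"
  have A0: "A0 \<ge> 0" unfolding A0_def using X0 by (intro sum_nonneg) auto
  have B0: "B0 \<ge> 0" unfolding B0_def
  proof (intro sum_nonneg divide_nonneg_nonneg mult_nonneg_nonneg)
    fix i assume i: "i \<in> G"
    show "0 \<le> X i" by (rule X0[OF i])
    have "i \<in> N" using i Gsub by auto
    thus "0 \<le> m i" by (auto intro: m_nonneg)
  qed simp
  define E where "E t = cluster_K G m (v t) - cluster_U G m (q t)" for t
  define dE where "dE t = (\<Sum>i\<in>G. inner (v t i) (F t i)) - (\<Sum>i\<in>G. \<Sum>j\<in>G-{i}. inner (g t i j) (v t i))" for t
  have dEd: "(E has_real_derivative dE t) (at t within S)" if t: "t \<in> S" for t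
  proof -
    have "E = (\<lambda>t. cluster_K G m (v t) - U2 G m (q t))" unfolding E_def[abs_def] by (rule ext) (simp only: cluster_U_eq[OF fG])
    thus ?thesis unfolding dE_def using dK[OF Gsub t] dU[OF Gsub t] by (simp add: DERIV_diff)
  qed
  have dE_eq: "dE t = (\<Sum>i\<in>G. inner (v t i) (\<Sum>j\<in>N-G. g t i j))" for t
  proof -
    have "inner (v t i) (F t i) - (\<Sum>j\<in>G-{i}. inner (g t i j) (v t i)) = inner (v t i) (\<Sum>j\<in>N-G. g t i j)"
      if i: "i \<in> G" for i
    proof -
      have NG: "N - {i} = (G - {i}) \<union> (N - G)" using i Gsub by auto
      have "F t i = sum (g t i) ((G - {i}) \<union> (N - G))" unfolding F_eq NG ..
      also have "\<dots> = (\<Sum>j\<in>G-{i}. g t i j) + (\<Sum>j\<in>N-G. g t i j)"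
        by (rule sum.union_disjoint) (use fG in auto)
      finally have "F t i = (\<Sum>j\<in>G-{i}. g t i j) + (\<Sum>j\<in>N-G. g t i j)" .
      thus ?thesis by (simp add: inner_add_right inner_sum_right inner_commute)
    qed
    thus ?thesis unfolding dE_def by (simp add: sum_subtractf[symmetric])
  qed
  have dE_b: "\<bar>dE t\<bar> \<le> A0 + B0 * K t" if t: "t \<in> S" for t
  proof -
    have "\<bar>inner (v t i) (\<Sum>j\<in>N-G. g t i j)\<bar> \<le> X i + 2 * X i / m i * K t" if i: "i \<in> G" for i
    proof -
      have iN: "i \<in> N" and mi: "m i > 0" using i Gsub mpos by auto
      have ns: "norm (\<Sum>j\<in>N-G. g t i j) \<le> X i"
        unfolding X_def
      proof (rule order_trans[OF norm_sum sum_mono])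
        fix j assume j: "j \<in> N - G"
        have "L i \<noteq> L j" using Gsep[OF i j] by auto
        then show "norm (g t i j) \<le> m i * m j / (\<delta> i j)\<^sup>2" using gb[of i j t] iN j t by auto
      qed
      have vK: "m i * (norm (v t i))\<^sup>2 \<le> 2 * K t"
      proof -
        have "m i * (norm (v t i))\<^sup>2 \<le> (\<Sum>j\<in>N. m j * (norm (v t j))\<^sup>2)"
          by (rule member_le_sum[where f="\<lambda>j. m j * (norm (v t j))\<^sup>2"]) (use iN in \<open>auto intro!: mult_nonneg_nonneg m_nonneg\<close>)
        thus ?thesis unfolding K_def cluster_K_def by simp
      qed
      have nv: "norm (v t i) \<le> 1 + 2 * K t / m i"
      proof -
        have "(norm (v t i) - 1)\<^sup>2 \<ge> 0" by simp
        hence "(norm (v t i))\<^sup>2 + 1 - 2 * norm (v t i) \<ge> 0" by (simp add: power2_diff)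
        hence "norm (v t i) \<le> 1 + (norm (v t i))\<^sup>2" using norm_ge_zero[of "v t i"] by linarith
        moreover have "(norm (v t i))\<^sup>2 \<le> 2 * K t / m i" using vK mi by (simp add: field_simps)
        ultimately show ?thesis by simp
      qed
      have "\<bar>inner (v t i) (\<Sum>j\<in>N-G. g t i j)\<bar> \<le> norm (v t i) * norm (\<Sum>j\<in>N-G. g t i j)"
        by (rule Cauchy_Schwarz_ineq2)
      also have "\<dots> \<le> (1 + 2 * K t / m i) * X i"
        using nv ns order_trans[OF norm_ge_zero nv] by (intro mult_mono) (auto simp: X0 i)
      also have "\<dots> = X i + 2 * X i / m i * K t" by (simp add: algebra_simps)
      finally show ?thesis .
    qed
    hence "\<bar>dE t\<bar> \<le> (\<Sum>i\<in>G. X i + 2 * X i / m i * K t)"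
      unfolding dE_eq by (rule order_trans[OF sum_abs sum_mono])
    thus ?thesis unfolding A0_def B0_def by (simp add: sum.distrib sum_distrib_right)
  qed
  define Gf where "Gf t = A0 * t + B0 * (J t + C0 * t) / 2" for t
  define dG where "dG t = A0 + B0 * ((4 * K t - 2 * Ut t - 2 * P t) + C0) / 2" for t
  have dGd: "(Gf has_real_derivative dG t) (at t within S)" if t: "t \<in> S" for t
    unfolding Gf_def[abs_def] dG_def using dJ[OF t] by (auto intro!: derivative_eq_intros)
  have dG_ge: "dG t \<ge> \<bar>dE t\<bar>" if t: "t \<in> S" for t
  proof -
    have "2 * K t \<le> (4 * K t - 2 * Ut t - 2 * P t) + C0" using dJb[OF t] by linarith
    hence "B0 * (2 * K t) \<le> B0 * ((4 * K t - 2 * Ut t - 2 * P t) + C0)" by (rule mult_left_mono[OF _ B0])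
    moreover have "B0 * (2 * K t) = 2 * (B0 * K t)" by simp
    ultimately show ?thesis using dE_b[OF t] unfolding dG_def by linarith
  qed
  have m1: "E x + Gf x \<le> E y + Gf y" if xy: "t0 \<le> x" "x \<le> y" "y < T" for x y
  proof (rule mono_from_deriv[where f="\<lambda>t. E t + Gf t" and f'="\<lambda>t. dE t + dG t" and a=t0 and b=T])
    fix z assume z: "z \<in> S"
    thus "((\<lambda>t. E t + Gf t) has_real_derivative dE z + dG z) (at z within S)"
      by (intro DERIV_add dEd dGd)
    show "dE z + dG z \<ge> 0" using dG_ge[OF z] by linarith
  qed (use xy in auto)
  have m2: "Gf x - E x \<le> Gf y - E y" if xy: "t0 \<le> x" "x \<le> y" "y < T" for x y
  proof (rule mono_from_deriv[where f="\<lambda>t. Gf t - E t" and f'="\<lambda>t. dG t - dE t" and a=t0 and b=T])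
    fix z assume z: "z \<in> S"
    thus "((\<lambda>t. Gf t - E t) has_real_derivative dG z - dE z) (at z within S)"
      by (intro DERIV_diff dEd dGd)
    show "dG z - dE z \<ge> 0" using dG_ge[OF z] by linarith
  qed (use xy in auto)
  define Gm where "Gm = A0 * T + B0 * (C0 * (T - t0) + C0 * T) / 2"
  have Gle: "Gf t \<le> Gm" if t: "t \<in> S" for t
  proof -
    have "A0 * t \<le> A0 * T" using A0 t by (intro mult_left_mono) auto
    moreover have Ct: "C0 * t \<le> C0 * T" using C0 t by (intro mult_left_mono) auto
    moreover have "B0 * (J t + C0 * t) \<le> B0 * (C0 * (T - t0) + C0 * T)"
      using Jle[OF t] Ct B0 by (intro mult_left_mono) auto
    ultimately show ?thesis unfolding Gf_def Gm_def by linarith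
  qed
  have Eb: "\<bar>E t\<bar> \<le> \<bar>E t0\<bar> + Gm - Gf t0" if t: "t \<in> S" for t
  proof -
    have "E t0 + Gf t0 \<le> E t + Gf t" "Gf t0 - E t0 \<le> Gf t - E t" using m1[of t0 t] m2[of t0 t] t by auto
    thus ?thesis using Gle[OF t] by linarith
  qed
  have bound: "\<exists>B. \<forall>t\<in>S. \<bar>E t\<bar> \<le> B" using Eb by blast
  have "\<exists>l. ((\<lambda>t. E t + Gf t) \<longlongrightarrow> l) (at_left T)"
  proof (rule mono_left_lim[OF tT])
    fix x assume x: "t0 \<le> x" "x < T"
    hence "x \<in> S" by auto
    thus "E x + Gf x \<le> 2 * Gm - Gf t0 + E t0" using m2[of t0 x] Gle x by fastforce
  qed (rule m1)
  then obtain l1 where l1: "((\<lambda>t. E t + Gf t) \<longlongrightarrow> l1) (at_left T)" by blast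
  have "\<exists>l. ((\<lambda>t. Gf t - E t) \<longlongrightarrow> l) (at_left T)"
  proof (rule mono_left_lim[OF tT])
    fix x assume x: "t0 \<le> x" "x < T"
    hence "x \<in> S" by auto
    thus "Gf x - E x \<le> 2 * Gm - Gf t0 - E t0" using m1[of t0 x] Gle x by fastforce
  qed (rule m2)
  then obtain l2 where l2: "((\<lambda>t. Gf t - E t) \<longlongrightarrow> l2) (at_left T)" by blast
  have "((\<lambda>t. ((E t + Gf t) - (Gf t - E t)) / 2) \<longlongrightarrow> (l1 - l2) / 2) (at_left T)"
    by (intro tendsto_intros l1 l2) simp
  hence "(E \<longlongrightarrow> (l1 - l2) / 2) (at_left T)" by simp
  thus ?thesis using bound unfolding E_def[abs_def] by blast
qed

end

theorem lemmaB10: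
  fixes n :: nat and m :: "nat \<Rightarrow> real" and t0 T :: real
    and q v :: "real \<Rightarrow> nat \<Rightarrow> real ^ 'd" and L :: "nat \<Rightarrow> real ^ 'd" and G :: "nat set"
  assumes dim: "CARD('d) = 2 \<or> CARD('d) = 3"
    and n2: "n \<ge> 2"
    and mpos: "\<And>i. i \<in> {1..n} \<Longrightarrow> m i > 0"
    and tT: "t0 < T"
    and vel: "\<And>i t. i \<in> {1..n} \<Longrightarrow> t \<in> {t0..<T} \<Longrightarrow>
                ((\<lambda>s. q s i) has_vector_derivative v t i) (at t within {t0..<T})"
    and eqn: "\<And>i t. i \<in> {1..n} \<Longrightarrow> t \<in> {t0..<T} \<Longrightarrow>
                ((\<lambda>s. v s i) has_vector_derivative (1 / m i) *\<^sub>R nbody_force n m (q t) i) (at t within {t0..<T})"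
    and nocoll: "\<And>i j t. i \<in> {1..n} \<Longrightarrow> j \<in> {1..n} \<Longrightarrow> i \<noteq> j \<Longrightarrow> t \<in> {t0..<T} \<Longrightarrow> q t i \<noteq> q t j"
    and lim: "\<And>i. i \<in> {1..n} \<Longrightarrow> ((\<lambda>t. q t i) \<longlongrightarrow> L i) (at_left T)"
    and Gsub: "G \<subseteq> {1..n}" and Gcard: "card G \<ge> 2"
    and Gsame: "\<And>i j. i \<in> G \<Longrightarrow> j \<in> G \<Longrightarrow> L i = L j"
    and Gsep: "\<And>i j. i \<in> G \<Longrightarrow> j \<in> {1..n} - G \<Longrightarrow> L j \<noteq> L i"
  shows "(\<exists>h. ((\<lambda>t. cluster_K G m (v t) - cluster_U G m (q t)) \<longlongrightarrow> h) (at_left T))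
       \<and> (\<exists>B. \<forall>t\<in>{t0..<T}. \<bar>cluster_K G m (v t) - cluster_U G m (q t)\<bar> \<le> B)"
proof -
  interpret nb n m t0 T q v L
    by (unfold_locales) (fact mpos tT vel eqn nocoll lim)+
  show ?thesis by (rule main[OF Gsub Gsep])
qed

end
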